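(* Let $\{A_n\}_{n\geqslant 1}$ be i.i.d. nonnegative random variables with Laplace–Stieltjes transform $\alpha(s)=\mathbb{E}[e^{-sA_1}]$, and let $\{B_n\}_{n\geqslant 1}$ be i.i.d. exponentially distributed with rate $\mu>0$, independent of $\{A_n\}$. Let $W_1\geqslant 0$ be a random variable (possibly a constant) independent of $\{A_n\},\{B_n\}$ with finite mean, and let $W_{n+1}=\max\{0,\,B_{n+1}-A_n-W_n\}$ for $n\geqslant 1$. Then for every $n\geqslant 2$ and $k\geqslant 1$, $$\operatorname{cov}[W_n,W_{n+k}]=\frac{\mathbb{E}[W_n]}{\mu}\left(\mathbb{P}[W_n=0]+\frac12\right)\left(-\frac{\alpha(\mu)}{2}\right)^{k}.$$ Furthermore, if the conditional distribution of $W_1$ given $W_1>0$ is exponential with rate $\mu$, then the same formula holds also for $n=1$. *)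

theory Defs
  imports "HOL-Probability.Probability"
begin

definition covariance :: "'a measure \<Rightarrow> ('a \<Rightarrow> real) \<Rightarrow> ('a \<Rightarrow> real) \<Rightarrow> real" where
  "covariance M X Y =
     (\<integral>x. (X x - (\<integral>y. X y \<partial>M)) * (Y x - (\<integral>y. Y y \<partial>M)) \<partial>M)"

definition driving_family ::
  "(nat \<Rightarrow> 'a \<Rightarrow> real) \<Rightarrow> (nat \<Rightarrow> 'a \<Rightarrow> real) \<Rightarrow> ('a \<Rightarrow> real) \<Rightarrow> nat + nat + unit \<Rightarrow> 'a \<Rightarrow> real" where
  "driving_family A B W1 i = (case i of Inl n \<Rightarrow> A n | Inr (Inl n) \<Rightarrow> B n | Inr (Inr _) \<Rightarrow> W1)"

end

theory Submission
  imports Defs "HOL-Real_Asymp.Real_Asymp"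
begin


lemma freeze:
  fixes Y Z :: "'a \<Rightarrow> 'b::second_countable_topology"
  assumes P: "prob_space M" and ind: "prob_space.indep_var M borel Y borel Z"
    and f[measurable]: "f \<in> borel_measurable (borel \<Otimes>\<^sub>M borel)"
  shows "(\<integral>\<^sup>+x. f (Y x, Z x) \<partial>M) = (\<integral>\<^sup>+x. (\<integral>\<^sup>+\<omega>. f (Y x, Z \<omega>) \<partial>M) \<partial>M)"
proof -
  interpret prob_space M by fact
  have rv[measurable]: "Y \<in> borel_measurable M" "Z \<in> borel_measurable M"
    and eq: "distr M borel Y \<Otimes>\<^sub>M distr M borel Z = distr M (borel \<Otimes>\<^sub>M borel) (\<lambda>x. (Y x, Z x))"
    using ind[unfolded indep_var_distribution_eq] by auto
  interpret DY: prob_space "distr M borel Y" by (rule prob_space_distr) simp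
  interpret DZ: prob_space "distr M borel Z" by (rule prob_space_distr) simp
  have fm: "f \<in> borel_measurable (distr M borel Y \<Otimes>\<^sub>M distr M borel Z)"
    using f by (simp add: measurable_cong_sets[OF sets_pair_measure_cong[OF sets_distr sets_distr] refl])
  have "(\<integral>\<^sup>+x. f (Y x, Z x) \<partial>M) = (\<integral>\<^sup>+p. f p \<partial>distr M (borel \<Otimes>\<^sub>M borel) (\<lambda>x. (Y x, Z x)))"
    by (subst nn_integral_distr) auto
  also have "\<dots> = (\<integral>\<^sup>+p. f p \<partial>(distr M borel Y \<Otimes>\<^sub>M distr M borel Z))" by (simp add: eq)
  also have "\<dots> = (\<integral>\<^sup>+y. \<integral>\<^sup>+z. f (y,z) \<partial>distr M borel Z \<partial>distr M borel Y)"
    by (rule DZ.nn_integral_fst[symmetric]) (rule fm)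
  also have "\<dots> = (\<integral>\<^sup>+y. \<integral>\<^sup>+\<omega>. f (y, Z \<omega>) \<partial>M \<partial>distr M borel Y)"
    by (intro nn_integral_cong nn_integral_distr) auto
  also have "\<dots> = (\<integral>\<^sup>+x. \<integral>\<^sup>+\<omega>. f (Y x, Z \<omega>) \<partial>M \<partial>M)"
    by (rule nn_integral_distr) auto
  finally show ?thesis .
qed

fun wfun :: "nat \<Rightarrow> (nat + nat + unit \<Rightarrow> real) \<Rightarrow> real" where
  "wfun 0 f = 0"
| "wfun (Suc 0) f = f (Inr (Inr ()))"
| "wfun (Suc (Suc n)) f = max 0 (f (Inr (Inl (Suc (Suc n)))) - f (Inl (Suc n)) - wfun (Suc n) f)"

definition H :: "nat \<Rightarrow> (nat + nat + unit) set" where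
  "H n = {Inr (Inr ())} \<union> {Inl j | j. 1 \<le> j \<and> j < n} \<union> {Inr (Inl j) | j. 2 \<le> j \<and> j \<le> n}"

lemma H_mono: "n \<le> m \<Longrightarrow> H n \<subseteq> H m"
  unfolding H_def by auto

lemma wfun_local: "(\<And>i. i \<in> H n \<Longrightarrow> f i = g i) \<Longrightarrow> wfun n f = wfun n g"
proof (induction n f rule: wfun.induct)
  case (3 n f)
  have "wfun (Suc n) f = wfun (Suc n) g"
    by (rule 3(1)) (use 3(2) H_mono[of "Suc n" "Suc (Suc n)"] in auto)
  moreover have "f (Inr (Inl (Suc (Suc n)))) = g (Inr (Inl (Suc (Suc n))))"
    "f (Inl (Suc n)) = g (Inl (Suc n))" using 3(2) unfolding H_def by auto
  ultimately show ?case by simp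
qed (auto simp: H_def)

lemma wfun_restrict: "H n \<subseteq> J \<Longrightarrow> wfun n (restrict f J) = wfun n f"
  by (rule wfun_local) auto

lemma wfun_measurable: "H n \<subseteq> J \<Longrightarrow> wfun n \<in> borel_measurable (PiM J (\<lambda>_. borel))"
proof (induction n rule: less_induct)
  case (less n)
  show ?case
  proof (cases n)
    case 0 then show ?thesis by simp
  next
    case (Suc k)
    show ?thesis
    proof (cases k)
      case 0 with Suc less(2) show ?thesis by (auto simp: H_def intro!: measurable_component_singleton)
    next
      case (Suc j)
      have "H (Suc j) \<subseteq> J" using less(2) \<open>n = Suc k\<close> Suc H_mono[of "Suc j" "Suc (Suc j)"] by auto
      then have m: "wfun (Suc j) \<in> borel_measurable (PiM J (\<lambda>_. borel))"
        using less(1) \<open>n = Suc k\<close> Suc by auto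
      have a: "Inr (Inl (Suc (Suc j))) \<in> J" "Inl (Suc j) \<in> J" using less(2) \<open>n = Suc k\<close> Suc by (auto simp: H_def)
      show ?thesis
        unfolding \<open>n = Suc k\<close> Suc wfun.simps
        by (intro borel_measurable_max borel_measurable_diff measurable_component_singleton a m) auto
    qed
  qed
qed



lemma expd_total: "0 < \<mu> \<Longrightarrow> (\<integral>\<^sup>+b. ennreal (exponential_density \<mu> b) \<partial>lborel) = 1"
proof -
  assume "0 < \<mu>"
  then interpret prob_space "density lborel (exponential_density \<mu>)" by (rule prob_space_exponential_density)
  have "emeasure (density lborel (exponential_density \<mu>)) UNIV = 1"
    using emeasure_space_1 by simp
  then show ?thesis by (simp add: emeasure_density)
qed

lemma expd_shift:
  fixes g :: "real \<Rightarrow> ennreal"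
  assumes mu: "0 < \<mu>" and c: "0 \<le> c" and g[measurable]: "g \<in> borel_measurable borel"
  shows "(\<integral>\<^sup>+b. ennreal (exponential_density \<mu> b) * g (b - c) * indicator {c..} b \<partial>lborel)
       = ennreal (exp (-\<mu>*c)) * (\<integral>\<^sup>+b. ennreal (exponential_density \<mu> b) * g b \<partial>lborel)"
proof -
  let ?F = "\<lambda>b. ennreal (exponential_density \<mu> b) * g (b - c) * indicator {c..} b"
  have "(\<integral>\<^sup>+b. ?F b \<partial>lborel) = (\<integral>\<^sup>+b. ?F b \<partial>distr lborel borel ((+) c))"
    by (simp add: lborel_distr_plus)
  also have "\<dots> = (\<integral>\<^sup>+s. ?F (c + s) \<partial>lborel)"
    by (subst nn_integral_distr) auto
  also have "\<dots> = (\<integral>\<^sup>+s. ennreal (exp (-\<mu>*c)) * (ennreal (exponential_density \<mu> s) * g s) \<partial>lborel)"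
  proof (intro nn_integral_cong)
    fix s :: real
    show "?F (c + s) = ennreal (exp (-\<mu>*c)) * (ennreal (exponential_density \<mu> s) * g s)"
    proof (cases "s < 0")
      case True then show ?thesis by (simp add: exponential_density_def indicator_def)
    next
      case False
      then have "exponential_density \<mu> (c + s) = exp (-\<mu>*c) * exponential_density \<mu> s"
        using c by (simp add: exponential_density_def exp_add[symmetric] algebra_simps)
      then show ?thesis using False
        by (simp add: indicator_def ennreal_mult' mult.assoc)
    qed
  qed
  also have "\<dots> = ennreal (exp (-\<mu>*c)) * (\<integral>\<^sup>+b. ennreal (exponential_density \<mu> b) * g b \<partial>lborel)"
    by (rule nn_integral_cmult) auto
  finally show ?thesis .
qed

lemma expd_psi:
  fixes h :: "real \<Rightarrow> ennreal"
  assumes mu: "0 < \<mu>" and c: "0 \<le> c" and h[measurable]: "h \<in> borel_measurable borel"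
  shows "(\<integral>\<^sup>+b. ennreal (exponential_density \<mu> b) * h (max 0 (b - c)) \<partial>lborel)
       = ennreal (1 - exp (-\<mu>*c)) * h 0 + ennreal (exp (-\<mu>*c)) * (\<integral>\<^sup>+b. ennreal (exponential_density \<mu> b) * h b \<partial>lborel)"
proof -
  let ?e = "\<lambda>b. ennreal (exponential_density \<mu> b)"
  have split: "\<And>b. ?e b * h (max 0 (b - c)) = h 0 * (?e b * indicator {..<c} b) + ?e b * h (b - c) * indicator {c..} b"
    by (auto simp: indicator_def mult.commute)
  have tot: "(\<integral>\<^sup>+b. ?e b * indicator {..<c} b \<partial>lborel) + (\<integral>\<^sup>+b. ?e b * (\<lambda>_. 1) (b - c) * indicator {c..} b \<partial>lborel) = 1"
    apply (subst nn_integral_add[symmetric])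
      apply auto[2]
    apply (rule trans[OF _ expd_total[OF mu]])
    apply (intro nn_integral_cong)
    subgoal for x by (cases "x < c") (simp_all add: indicator_def)
    done
  have sh1: "(\<integral>\<^sup>+b. ?e b * (\<lambda>_. 1) (b - c) * indicator {c..} b \<partial>lborel) = ennreal (exp (-\<mu>*c))"
    using expd_shift[OF mu c, of "\<lambda>_. 1"] expd_total[OF mu] by simp
  have low: "(\<integral>\<^sup>+b. ?e b * indicator {..<c} b \<partial>lborel) = ennreal (1 - exp (-\<mu>*c))"
  proof -
    have "(\<integral>\<^sup>+b. ?e b * indicator {..<c} b \<partial>lborel) = 1 - ennreal (exp (-\<mu>*c))"
    proof -
      have "(\<integral>\<^sup>+b. ?e b * indicator {..<c} b \<partial>lborel) = ((\<integral>\<^sup>+b. ?e b * indicator {..<c} b \<partial>lborel) + ennreal (exp (-\<mu>*c))) - ennreal (exp (-\<mu>*c))"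
        by (rule ennreal_add_diff_cancel_right[symmetric]) simp
      also have "\<dots> = 1 - ennreal (exp (-\<mu>*c))" using tot unfolding sh1 by simp
      finally show ?thesis .
    qed
    also have "\<dots> = ennreal (1 - exp (-\<mu>*c))"
      by (subst ennreal_1[symmetric], subst ennreal_minus) auto
    finally show ?thesis .
  qed
  have "(\<integral>\<^sup>+b. ?e b * h (max 0 (b - c)) \<partial>lborel)
      = (\<integral>\<^sup>+b. h 0 * (?e b * indicator {..<c} b) \<partial>lborel) + (\<integral>\<^sup>+b. ?e b * h (b - c) * indicator {c..} b \<partial>lborel)"
    unfolding split by (rule nn_integral_add) auto
  also have "\<dots> = h 0 * ennreal (1 - exp (-\<mu>*c)) + ennreal (exp (-\<mu>*c)) * (\<integral>\<^sup>+b. ?e b * h b \<partial>lborel)"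
    by (subst nn_integral_cmult) (auto simp: low expd_shift[OF mu c h])
  finally show ?thesis by (simp add: mult.commute)
qed

lemma expd_K_id: "0 < \<mu> \<Longrightarrow> (\<integral>\<^sup>+b. ennreal (exponential_density \<mu> b) * ennreal b \<partial>lborel) = ennreal (1/\<mu>)"
proof -
  assume mu: "0 < \<mu>"
  have "(\<integral>\<^sup>+b. ennreal (exponential_density \<mu> b) * ennreal b \<partial>lborel)
      = (\<integral>\<^sup>+b. ennreal (\<mu> * b * exp (- b * \<mu>)) * indicator {0..} b \<partial>lborel)"
    using mu by (intro nn_integral_cong) (auto simp: exponential_density_def indicator_def ennreal_mult'[symmetric] mult_ac)
  also have "\<dots> = 0 - (- (0 + 1/\<mu>) * exp (- 0 * \<mu>))"
  proof (rule nn_integral_FTC_atLeast[where F = "\<lambda>b. - (b + 1/\<mu>) * exp (- b * \<mu>)"])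
    fix x :: real assume "0 \<le> x"
    show "((\<lambda>b. - (b + 1/\<mu>) * exp (- b * \<mu>)) has_real_derivative \<mu> * x * exp (- x * \<mu>)) (at x)"
      using mu by (auto intro!: derivative_eq_intros simp: field_simps)
    show "0 \<le> \<mu> * x * exp (- x * \<mu>)" using mu \<open>0 \<le> x\<close> by simp
  next
    show "((\<lambda>b. - (b + 1/\<mu>) * exp (- b * \<mu>)) \<longlongrightarrow> 0) at_top" using mu by real_asymp
  qed auto
  finally show ?thesis by simp
qed

lemma expd_K_exp: "0 < \<mu> \<Longrightarrow> (\<integral>\<^sup>+b. ennreal (exponential_density \<mu> b) * ennreal (exp (-\<mu>*b)) \<partial>lborel) = ennreal (1/2)"
proof -
  assume mu: "0 < \<mu>"
  have "(\<integral>\<^sup>+b. ennreal (exponential_density \<mu> b) * ennreal (exp (-\<mu>*b)) \<partial>lborel)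
      = (\<integral>\<^sup>+b. ennreal (\<mu> * exp (- b * (2*\<mu>))) * indicator {0..} b \<partial>lborel)"
    using mu by (intro nn_integral_cong) (auto simp: exponential_density_def indicator_def ennreal_mult'[symmetric] mult_ac exp_add[symmetric])
  also have "\<dots> = 0 - (- exp (- 0 * (2*\<mu>)) / 2)"
  proof (rule nn_integral_FTC_atLeast[where F = "\<lambda>b. - exp (- b * (2*\<mu>)) / 2"])
    fix x :: real assume "0 \<le> x"
    show "((\<lambda>b. - exp (- b * (2*\<mu>)) / 2) has_real_derivative \<mu> * exp (- x * (2*\<mu>))) (at x)"
      using mu by (auto intro!: derivative_eq_intros simp: field_simps)
    show "0 \<le> \<mu> * exp (- x * (2*\<mu>))" using mu by simp
  next
    show "((\<lambda>b. - exp (- b * (2*\<mu>)) / 2) \<longlongrightarrow> 0) at_top" using mu by real_asymp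
  qed auto
  finally show ?thesis by simp
qed

lemma expd_K_xexp: "0 < \<mu> \<Longrightarrow> (\<integral>\<^sup>+b. ennreal (exponential_density \<mu> b) * ennreal (b * exp (-\<mu>*b)) \<partial>lborel) = ennreal (1/(4*\<mu>))"
proof -
  assume mu: "0 < \<mu>"
  have "(\<integral>\<^sup>+b. ennreal (exponential_density \<mu> b) * ennreal (b * exp (-\<mu>*b)) \<partial>lborel)
      = (\<integral>\<^sup>+b. ennreal (\<mu> * b * exp (- b * (2*\<mu>))) * indicator {0..} b \<partial>lborel)"
    using mu by (intro nn_integral_cong) (auto simp: exponential_density_def indicator_def ennreal_mult'[symmetric] mult_ac exp_add[symmetric])
  also have "\<dots> = 0 - (- (0/2 + 1/(4*\<mu>)) * exp (- 0 * (2*\<mu>)))"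
  proof (rule nn_integral_FTC_atLeast[where F = "\<lambda>b. - (b/2 + 1/(4*\<mu>)) * exp (- b * (2*\<mu>))"])
    fix x :: real assume "0 \<le> x"
    show "((\<lambda>b. - (b/2 + 1/(4*\<mu>)) * exp (- b * (2*\<mu>))) has_real_derivative \<mu> * x * exp (- x * (2*\<mu>))) (at x)"
      using mu by (auto intro!: derivative_eq_intros simp: field_simps)
    show "0 \<le> \<mu> * x * exp (- x * (2*\<mu>))" using mu \<open>0 \<le> x\<close> by simp
  next
    show "((\<lambda>b. - (b/2 + 1/(4*\<mu>)) * exp (- b * (2*\<mu>))) \<longlongrightarrow> 0) at_top" using mu by real_asymp
  qed auto
  finally show ?thesis by simp
qed

lemma expd_K_zero: "(\<integral>\<^sup>+b. ennreal (exponential_density \<mu> b) * indicator {0} b \<partial>lborel) = 0"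
proof -
  have "AE b in lborel. ennreal (exponential_density \<mu> b) * indicator {0} b = (0::ennreal)"
    using AE_lborel_singleton[of 0] by eventually_elim (auto simp: indicator_def)
  from nn_integral_cong_AE[OF this] show ?thesis by simp
qed



definition Kint :: "real \<Rightarrow> (real \<Rightarrow> ennreal) \<Rightarrow> ennreal" where
  "Kint \<mu> h = (\<integral>\<^sup>+b. ennreal (exponential_density \<mu> b) * h b \<partial>lborel)"

definition II :: "(nat + nat + unit) set" where
  "II = {Inl n | n. n \<ge> 1} \<union> {Inr (Inl n) | n. n \<ge> 1} \<union> {Inr (Inr ())}"

locale model = prob_space M for M :: "'a measure" +
  fixes A B W :: "nat \<Rightarrow> 'a \<Rightarrow> real" and \<mu> :: real
  assumes mu: "\<mu> > 0"
    and indep: "indep_vars (\<lambda>_. borel) (driving_family A B (W 1)) II"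
    and A_rv: "\<And>n. n \<ge> 1 \<Longrightarrow> A n \<in> borel_measurable M"
    and A_nonneg: "\<And>n. n \<ge> 1 \<Longrightarrow> AE x in M. A n x \<ge> 0"
    and A_ident: "\<And>n. n \<ge> 1 \<Longrightarrow> distr M borel (A n) = distr M borel (A 1)"
    and B_exp: "\<And>n. n \<ge> 1 \<Longrightarrow> distributed M lborel (B n) (exponential_density \<mu>)"
    and W1_rv: "W 1 \<in> borel_measurable M"
    and W1_nonneg: "AE x in M. W 1 x \<ge> 0"
    and W1_int: "integrable M (W 1)"
    and W_rec: "\<And>n x. n \<ge> 1 \<Longrightarrow> W (Suc n) x = max 0 (B (Suc n) x - A n x - W n x)"
begin

definition alpha where "alpha = (\<integral>x. exp (- \<mu> * A 1 x) \<partial>M)"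

abbreviation D where "D \<equiv> driving_family A B (W 1)"

lemma B_rv: "n \<ge> 1 \<Longrightarrow> B n \<in> borel_measurable M"
  using B_exp[of n] by (simp add: distributed_def)

lemma W_eq: "n \<ge> 1 \<Longrightarrow> W n x = wfun n (\<lambda>i. D i x)"
proof (induction n rule: nat_induct_at_least)
  case base then show ?case by (simp add: driving_family_def)
next
  case (Suc n)
  then obtain k where k: "n = Suc k" by (cases n) auto
  show ?case using Suc W_rec[of n x] by (simp add: k driving_family_def)
qed

lemma H_sub: "H n \<subseteq> II"
  unfolding H_def II_def by auto

lemma D_restrict_meas: "J \<subseteq> II \<Longrightarrow> (\<lambda>\<omega>. restrict (\<lambda>i. D i \<omega>) J) \<in> measurable M (PiM J (\<lambda>_. borel))"
  using indep unfolding indep_vars_def by (intro measurable_restrict) auto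

lemma W_restrict: "n \<ge> 1 \<Longrightarrow> H n \<subseteq> J \<Longrightarrow> W n \<omega> = wfun n (restrict (\<lambda>i. D i \<omega>) J)"
  by (simp add: W_eq wfun_restrict)

lemma W_rv: "n \<ge> 1 \<Longrightarrow> W n \<in> borel_measurable M"
proof -
  assume n: "n \<ge> 1"
  have "(\<lambda>\<omega>. wfun n (restrict (\<lambda>i. D i \<omega>) (H n))) \<in> borel_measurable M"
    by (rule measurable_compose[OF D_restrict_meas[OF H_sub] wfun_measurable]) simp
  moreover have "W n = (\<lambda>\<omega>. wfun n (restrict (\<lambda>i. D i \<omega>) (H n)))"
    using W_restrict[OF n order_refl] by (simp add: fun_eq_iff)
  ultimately show ?thesis by simp
qed

lemma W_nonneg: "n \<ge> 1 \<Longrightarrow> AE x in M. W n x \<ge> 0"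
proof (cases n)
  case (Suc k) assume "n \<ge> 1"
  show ?thesis
  proof (cases k)
    case 0 then show ?thesis using W1_nonneg Suc by simp
  next
    case (Suc j) then show ?thesis using \<open>n = Suc k\<close> W_rec[of k] by auto
  qed
qed simp

lemma indep_restrict:
  fixes Y1 Y2 :: "_ \<Rightarrow> 'b::topological_space"
  assumes "J \<subseteq> II" "K \<subseteq> II" "J \<inter> K = {}"
    and "Y1 \<in> borel_measurable (PiM J (\<lambda>_. borel))" "Y2 \<in> borel_measurable (PiM K (\<lambda>_. borel))"
  shows "indep_var borel (\<lambda>\<omega>. Y1 (restrict (\<lambda>i. D i \<omega>) J)) borel (\<lambda>\<omega>. Y2 (restrict (\<lambda>i. D i \<omega>) K))"
  using indep_var_compose[OF indep_var_restrict[OF indep assms(3,1,2)] assms(4,5)]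
  by (simp add: comp_def)

lemma stepB:
  fixes u h :: "real \<Rightarrow> ennreal"
  assumes n: "1 \<le> n" "n \<le> m" and u[measurable]: "u \<in> borel_measurable borel" and h[measurable]: "h \<in> borel_measurable borel"
  shows "(\<integral>\<^sup>+x. u (W n x) * h (W (Suc m) x) \<partial>M)
       = (\<integral>\<^sup>+x. u (W n x) * (ennreal (1 - exp (-\<mu> * (A m x + W m x))) * h 0
                 + ennreal (exp (-\<mu> * (A m x + W m x))) * Kint \<mu> h) \<partial>M)"
proof -
  have m: "m \<ge> 1" using n by simp
  let ?J = "insert (Inl m) (H m)" and ?K = "{Inr (Inl (Suc m))}"
  let ?Y1 = "\<lambda>f. (wfun n f, f (Inl m) + wfun m f)" and ?Y2 = "\<lambda>f::nat + nat + unit \<Rightarrow> real. (f (Inr (Inl (Suc m))), 0::real)"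
  have J: "?J \<subseteq> II" "?K \<subseteq> II" "?J \<inter> ?K = {}" using H_sub m unfolding II_def H_def by auto
  have HnJ: "H n \<subseteq> ?J" "H m \<subseteq> ?J" using H_mono[OF n(2)] by auto
  have [measurable]: "wfun n \<in> borel_measurable (PiM ?J (\<lambda>_. borel))" "wfun m \<in> borel_measurable (PiM ?J (\<lambda>_. borel))"
    using wfun_measurable[OF HnJ(1)] wfun_measurable[OF HnJ(2)] by auto
  have "?Y1 \<in> borel_measurable (PiM ?J (\<lambda>_. borel))"
    by (intro borel_measurable_Pair borel_measurable_add measurable_component_singleton) auto
  moreover have "?Y2 \<in> borel_measurable (PiM ?K (\<lambda>_. borel))"
    by (intro borel_measurable_Pair measurable_component_singleton) auto
  ultimately have ind0: "indep_var borel (\<lambda>\<omega>. ?Y1 (restrict (\<lambda>i. D i \<omega>) ?J)) borel (\<lambda>\<omega>. ?Y2 (restrict (\<lambda>i. D i \<omega>) ?K))"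
    by (rule indep_restrict[OF J])
  have e1: "(\<lambda>\<omega>. ?Y1 (restrict (\<lambda>i. D i \<omega>) ?J)) = (\<lambda>\<omega>. (W n \<omega>, A m \<omega> + W m \<omega>))"
    using W_restrict[OF n(1) HnJ(1)] W_restrict[OF m HnJ(2)] by (auto simp: fun_eq_iff driving_family_def)
  have e2: "(\<lambda>\<omega>. ?Y2 (restrict (\<lambda>i. D i \<omega>) ?K)) = (\<lambda>\<omega>. (B (Suc m) \<omega>, 0))"
    by (auto simp: fun_eq_iff driving_family_def)
  have ind: "indep_var borel (\<lambda>\<omega>. (W n \<omega>, A m \<omega> + W m \<omega>)) borel (\<lambda>\<omega>. (B (Suc m) \<omega>, 0::real))"
    using ind0 unfolding e1 e2 .
  define f where "f = (\<lambda>(p::real\<times>real, q::real\<times>real). u (fst p) * h (max 0 (fst q - snd p)))"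
  have fm: "f \<in> borel_measurable (borel \<Otimes>\<^sub>M borel)" proof -
    have "f \<in> borel_measurable ((borel \<Otimes>\<^sub>M borel) \<Otimes>\<^sub>M (borel \<Otimes>\<^sub>M borel))" unfolding f_def by measurable
    then show ?thesis by (simp add: borel_prod)
  qed
  note fr = freeze[OF prob_space_axioms ind fm]
  have [measurable]: "B (Suc m) \<in> borel_measurable M" by (rule B_rv) simp
  have "(\<integral>\<^sup>+x. u (W n x) * h (W (Suc m) x) \<partial>M) = (\<integral>\<^sup>+x. f ((W n x, A m x + W m x), (B (Suc m) x, 0)) \<partial>M)"
    using W_rec[OF m] by (intro nn_integral_cong) (simp add: f_def algebra_simps)
  also have "\<dots> = (\<integral>\<^sup>+x. (\<integral>\<^sup>+\<omega>. f ((W n x, A m x + W m x), (B (Suc m) \<omega>, 0)) \<partial>M) \<partial>M)"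
    by (rule fr)
  also have "\<dots> = (\<integral>\<^sup>+x. u (W n x) * (ennreal (1 - exp (-\<mu> * (A m x + W m x))) * h 0
                 + ennreal (exp (-\<mu> * (A m x + W m x))) * Kint \<mu> h) \<partial>M)"
  proof (rule nn_integral_cong_AE)
    have "AE x in M. A m x \<ge> 0 \<and> W m x \<ge> 0" using A_nonneg[OF m] W_nonneg[OF m] by eventually_elim auto
    then show "AE x in M. (\<integral>\<^sup>+\<omega>. f ((W n x, A m x + W m x), (B (Suc m) \<omega>, 0)) \<partial>M) = u (W n x) * (ennreal (1 - exp (-\<mu> * (A m x + W m x))) * h 0
                 + ennreal (exp (-\<mu> * (A m x + W m x))) * Kint \<mu> h)"
    proof eventually_elim
      case (elim x)
      let ?c = "A m x + W m x"
      have c: "0 \<le> ?c" using elim by simp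
      have "(\<integral>\<^sup>+\<omega>. f ((W n x, ?c), (B (Suc m) \<omega>, 0)) \<partial>M) = (\<integral>\<^sup>+\<omega>. u (W n x) * h (max 0 (B (Suc m) \<omega> - ?c)) \<partial>M)"
        by (simp add: f_def)
      also have "\<dots> = u (W n x) * (\<integral>\<^sup>+\<omega>. h (max 0 (B (Suc m) \<omega> - ?c)) \<partial>M)"
        by (rule nn_integral_cmult) measurable
      also have "(\<integral>\<^sup>+\<omega>. h (max 0 (B (Suc m) \<omega> - ?c)) \<partial>M) = (\<integral>\<^sup>+b. ennreal (exponential_density \<mu> b) * h (max 0 (b - ?c)) \<partial>lborel)"
        by (rule distributed_nn_integral[OF B_exp, symmetric]) auto
      also have "\<dots> = ennreal (1 - exp (-\<mu> * ?c)) * h 0 + ennreal (exp (-\<mu> * ?c)) * Kint \<mu> h"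
        unfolding Kint_def by (rule expd_psi[OF mu c h])
      finally show ?case .
    qed
  qed
  finally show ?thesis .
qed

lemma int_exp_A: "m \<ge> 1 \<Longrightarrow> integrable M (\<lambda>x. exp (- \<mu> * A m x))"
proof -
  assume m: "m \<ge> 1"
  note [measurable] = A_rv[OF m]
  show ?thesis
  proof (rule Bochner_Integration.integrable_bound[OF integrable_const[of 1]])
    show "AE x in M. norm (exp (- \<mu> * A m x)) \<le> norm (1::real)"
      using A_nonneg[OF m] by eventually_elim (use mu in simp)
  qed measurable
qed

lemma alpha_nonneg: "0 \<le> alpha"
  unfolding alpha_def by (rule integral_nonneg_AE) simp

lemma alpha_nn: "m \<ge> 1 \<Longrightarrow> (\<integral>\<^sup>+x. ennreal (exp (-\<mu> * A m x)) \<partial>M) = ennreal alpha"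
proof -
  assume m: "m \<ge> 1"
  have [measurable]: "A m \<in> borel_measurable M" "A 1 \<in> borel_measurable M" using A_rv m by auto
  have "(\<integral>\<^sup>+x. ennreal (exp (-\<mu> * A m x)) \<partial>M) = (\<integral>\<^sup>+a. ennreal (exp (-\<mu> * a)) \<partial>distr M borel (A m))"
    by (subst nn_integral_distr) auto
  also have "\<dots> = (\<integral>\<^sup>+a. ennreal (exp (-\<mu> * a)) \<partial>distr M borel (A 1))"
    using A_ident[OF m] by simp
  also have "\<dots> = (\<integral>\<^sup>+x. ennreal (exp (-\<mu> * A 1 x)) \<partial>M)"
    by (rule nn_integral_distr) measurable
  also have "\<dots> = ennreal alpha"
    unfolding alpha_def by (rule nn_integral_eq_integral[OF int_exp_A]) auto
  finally show ?thesis .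
qed

lemma stepA:
  fixes u :: "real \<Rightarrow> ennreal"
  assumes n: "1 \<le> n" "n \<le> m" and u[measurable]: "u \<in> borel_measurable borel"
  shows "(\<integral>\<^sup>+x. u (W n x) * ennreal (exp (-\<mu> * (A m x + W m x))) \<partial>M)
       = ennreal alpha * (\<integral>\<^sup>+x. u (W n x) * ennreal (exp (-\<mu> * W m x)) \<partial>M)"
proof -
  have m: "m \<ge> 1" using n by simp
  let ?J = "H m" and ?K = "{Inl m}"
  let ?Y1 = "\<lambda>f. (wfun n f, wfun m f)" and ?Y2 = "\<lambda>f::nat + nat + unit \<Rightarrow> real. (f (Inl m), 0::real)"
  have J: "?J \<subseteq> II" "?K \<subseteq> II" "?J \<inter> ?K = {}" using H_sub m unfolding II_def H_def by auto
  have HnJ: "H n \<subseteq> ?J" "H m \<subseteq> ?J" using H_mono[OF n(2)] by auto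
  have [measurable]: "wfun n \<in> borel_measurable (PiM ?J (\<lambda>_. borel))" "wfun m \<in> borel_measurable (PiM ?J (\<lambda>_. borel))"
    using wfun_measurable[OF HnJ(1)] wfun_measurable[OF HnJ(2)] by auto
  have "?Y1 \<in> borel_measurable (PiM ?J (\<lambda>_. borel))"
    by (intro borel_measurable_Pair) auto
  moreover have "?Y2 \<in> borel_measurable (PiM ?K (\<lambda>_. borel))"
    by (intro borel_measurable_Pair measurable_component_singleton) auto
  ultimately have ind0: "indep_var borel (\<lambda>\<omega>. ?Y1 (restrict (\<lambda>i. D i \<omega>) ?J)) borel (\<lambda>\<omega>. ?Y2 (restrict (\<lambda>i. D i \<omega>) ?K))"
    by (rule indep_restrict[OF J])
  have e1: "(\<lambda>\<omega>. ?Y1 (restrict (\<lambda>i. D i \<omega>) ?J)) = (\<lambda>\<omega>. (W n \<omega>, W m \<omega>))"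
    using W_restrict[OF n(1) HnJ(1)] W_restrict[OF m HnJ(2)] by (auto simp: fun_eq_iff)
  have e2: "(\<lambda>\<omega>. ?Y2 (restrict (\<lambda>i. D i \<omega>) ?K)) = (\<lambda>\<omega>. (A m \<omega>, 0))"
    by (auto simp: fun_eq_iff driving_family_def)
  have ind: "indep_var borel (\<lambda>\<omega>. (W n \<omega>, W m \<omega>)) borel (\<lambda>\<omega>. (A m \<omega>, 0::real))"
    using ind0 unfolding e1 e2 .
  define f where "f = (\<lambda>(p::real\<times>real, q::real\<times>real). u (fst p) * ennreal (exp (-\<mu> * snd p)) * ennreal (exp (-\<mu> * fst q)))"
  have fm: "f \<in> borel_measurable (borel \<Otimes>\<^sub>M borel)"
  proof -
    have "f \<in> borel_measurable ((borel \<Otimes>\<^sub>M borel) \<Otimes>\<^sub>M (borel \<Otimes>\<^sub>M borel))" unfolding f_def by measurable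
    then show ?thesis by (simp add: borel_prod)
  qed
  note fr = freeze[OF prob_space_axioms ind fm]
  have [measurable]: "A m \<in> borel_measurable M" "W n \<in> borel_measurable M" "W m \<in> borel_measurable M"
    using A_rv W_rv m n by auto
  have "(\<integral>\<^sup>+x. u (W n x) * ennreal (exp (-\<mu> * (A m x + W m x))) \<partial>M) = (\<integral>\<^sup>+x. f ((W n x, W m x), (A m x, 0)) \<partial>M)"
  proof (intro nn_integral_cong)
    fix x
    have "exp (-\<mu> * (A m x + W m x)) = exp (-\<mu> * W m x) * exp (-\<mu> * A m x)"
      by (simp add: exp_add[symmetric] algebra_simps)
    then show "u (W n x) * ennreal (exp (-\<mu> * (A m x + W m x))) = f ((W n x, W m x), (A m x, 0))"
      by (simp add: f_def ennreal_mult mult.assoc)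
  qed
  also have "\<dots> = (\<integral>\<^sup>+x. (\<integral>\<^sup>+\<omega>. f ((W n x, W m x), (A m \<omega>, 0)) \<partial>M) \<partial>M)"
    by (rule fr)
  also have "\<dots> = (\<integral>\<^sup>+x. u (W n x) * ennreal (exp (-\<mu> * W m x)) * ennreal alpha \<partial>M)"
  proof (rule nn_integral_cong)
    fix x
    have "(\<integral>\<^sup>+\<omega>. f ((W n x, W m x), (A m \<omega>, 0)) \<partial>M) = (\<integral>\<^sup>+\<omega>. (u (W n x) * ennreal (exp (-\<mu> * W m x))) * ennreal (exp (-\<mu> * A m \<omega>)) \<partial>M)"
      by (simp add: f_def)
    also have "\<dots> = u (W n x) * ennreal (exp (-\<mu> * W m x)) * (\<integral>\<^sup>+\<omega>. ennreal (exp (-\<mu> * A m \<omega>)) \<partial>M)"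
      by (rule nn_integral_cmult) measurable
    finally show "(\<integral>\<^sup>+\<omega>. f ((W n x, W m x), (A m \<omega>, 0)) \<partial>M) = u (W n x) * ennreal (exp (-\<mu> * W m x)) * ennreal alpha"
      using alpha_nn[OF m] by simp
  qed
  also have "\<dots> = ennreal alpha * (\<integral>\<^sup>+x. u (W n x) * ennreal (exp (-\<mu> * W m x)) \<partial>M)"
    by (subst nn_integral_multc) (auto simp: mult.commute)
  finally show ?thesis .
qed

end


lemma nn_to_real:
  fixes f g :: "'a \<Rightarrow> real"
  assumes "integrable M f" "AE x in M. 0 \<le> f x" "integrable M g" "AE x in M. 0 \<le> g x"
    and "(\<integral>\<^sup>+x. ennreal (f x) \<partial>M) = (\<integral>\<^sup>+x. ennreal (g x) \<partial>M)"
  shows "(\<integral>x. f x \<partial>M) = (\<integral>x. g x \<partial>M)"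
proof -
  have "ennreal (\<integral>x. f x \<partial>M) = ennreal (\<integral>x. g x \<partial>M)"
    using assms nn_integral_eq_integral[of M f] nn_integral_eq_integral[of M g] by simp
  then show ?thesis using assms by (simp add: integral_nonneg_AE)
qed

context model begin

lemma c_nonneg: "m \<ge> 1 \<Longrightarrow> AE x in M. 0 \<le> A m x + W m x"
proof -
  assume m: "m \<ge> 1"
  show ?thesis using A_nonneg[OF m] W_nonneg[OF m] by eventually_elim auto
qed

lemma B_int: "n \<ge> 1 \<Longrightarrow> integrable M (B n)"
  using erlang_ith_moment_integrable[OF mu B_exp, of n 1] by simp

lemma W_int: "n \<ge> 1 \<Longrightarrow> integrable M (W n)"
proof (induction n rule: nat_induct_at_least)
  case base then show ?case using W1_int by simp
next
  case (Suc m)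
  show ?case
  proof (rule Bochner_Integration.integrable_bound[OF B_int[of "Suc m"]])
    show "W (Suc m) \<in> borel_measurable M" by (rule W_rv) simp
    show "AE x in M. norm (W (Suc m) x) \<le> norm (B (Suc m) x)"
      using c_nonneg[OF Suc(1)] by eventually_elim (auto simp: W_rec[OF Suc(1)])
  qed simp
qed

lemma int_bounded_mult:
  fixes f g :: "'a \<Rightarrow> real"
  assumes "integrable M f" "g \<in> borel_measurable M" "AE x in M. \<bar>g x\<bar> \<le> 1"
  shows "integrable M (\<lambda>x. f x * g x)"
proof (rule Bochner_Integration.integrable_bound[OF assms(1)])
  show "(\<lambda>x. f x * g x) \<in> borel_measurable M" using assms(1,2) by measurable
  show "AE x in M. norm (f x * g x) \<le> norm (f x)"
    using assms(3) by eventually_elim (auto simp: abs_mult intro: mult_left_le)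
qed

lemma A_real:
  fixes v :: "real \<Rightarrow> real"
  assumes n: "1 \<le> n" "n \<le> m" and v[measurable]: "v \<in> borel_measurable borel"
    and vnn: "AE x in M. 0 \<le> v (W n x)" and vint: "integrable M (\<lambda>x. v (W n x))"
  shows "(\<integral>x. v (W n x) * exp (-\<mu> * (A m x + W m x)) \<partial>M) = alpha * (\<integral>x. v (W n x) * exp (-\<mu> * W m x) \<partial>M)"
proof -
  have m: "m \<ge> 1" using n by simp
  have [measurable]: "A m \<in> borel_measurable M" "W n \<in> borel_measurable M" "W m \<in> borel_measurable M"
    using A_rv W_rv m n by auto
  have i1: "integrable M (\<lambda>x. v (W n x) * exp (-\<mu> * (A m x + W m x)))"
    by (rule int_bounded_mult[OF vint]) (use c_nonneg[OF m] mu in \<open>auto elim!: eventually_mono\<close>)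
  have i2: "integrable M (\<lambda>x. v (W n x) * exp (-\<mu> * W m x))"
    by (rule int_bounded_mult[OF vint]) (use W_nonneg[OF m] mu in \<open>auto elim!: eventually_mono\<close>)
  have "(\<integral>x. v (W n x) * exp (-\<mu> * (A m x + W m x)) \<partial>M) = (\<integral>x. alpha * (v (W n x) * exp (-\<mu> * W m x)) \<partial>M)"
  proof (rule nn_to_real[OF i1 _ integrable_mult_right[OF i2]])
    show "AE x in M. 0 \<le> v (W n x) * exp (-\<mu> * (A m x + W m x))" using vnn by eventually_elim simp
    show "AE x in M. 0 \<le> alpha * (v (W n x) * exp (-\<mu> * W m x))" using vnn by eventually_elim (simp add: alpha_nonneg)
    have "(\<integral>\<^sup>+x. ennreal (v (W n x) * exp (-\<mu> * (A m x + W m x))) \<partial>M) = (\<integral>\<^sup>+x. ennreal (v (W n x)) * ennreal (exp (-\<mu> * (A m x + W m x))) \<partial>M)"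
      by (intro nn_integral_cong) (simp add: ennreal_mult'')
    also have "\<dots> = ennreal alpha * (\<integral>\<^sup>+x. ennreal (v (W n x)) * ennreal (exp (-\<mu> * W m x)) \<partial>M)"
      by (rule stepA[OF n]) measurable
    also have "\<dots> = (\<integral>\<^sup>+x. ennreal alpha * (ennreal (v (W n x)) * ennreal (exp (-\<mu> * W m x))) \<partial>M)"
      by (rule nn_integral_cmult[symmetric]) measurable
    also have "\<dots> = (\<integral>\<^sup>+x. ennreal (alpha * (v (W n x) * exp (-\<mu> * W m x))) \<partial>M)"
      by (intro nn_integral_cong) (simp add: ennreal_mult'' ennreal_mult' alpha_nonneg)
    finally show "(\<integral>\<^sup>+x. ennreal (v (W n x) * exp (-\<mu> * (A m x + W m x))) \<partial>M) = (\<integral>\<^sup>+x. ennreal (alpha * (v (W n x) * exp (-\<mu> * W m x))) \<partial>M)" .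
  qed
  then show ?thesis by simp
qed

lemma R1v:
  fixes v :: "real \<Rightarrow> real"
  assumes n: "1 \<le> n" "n \<le> m" and v[measurable]: "v \<in> borel_measurable borel"
    and vnn: "AE x in M. 0 \<le> v (W n x)" and vint: "integrable M (\<lambda>x. v (W n x))"
  shows "integrable M (\<lambda>x. v (W n x) * W (Suc m) x)"
    and "(\<integral>x. v (W n x) * W (Suc m) x \<partial>M) = alpha / \<mu> * (\<integral>x. v (W n x) * exp (-\<mu> * W m x) \<partial>M)"
proof -
  have m: "m \<ge> 1" using n by simp
  have [measurable]: "A m \<in> borel_measurable M" "W n \<in> borel_measurable M" "W m \<in> borel_measurable M" "W (Suc m) \<in> borel_measurable M"
    using A_rv W_rv m n by auto
  have i1: "integrable M (\<lambda>x. v (W n x) * exp (-\<mu> * (A m x + W m x)))"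
    by (rule int_bounded_mult[OF vint]) (use c_nonneg[OF m] mu in \<open>auto elim!: eventually_mono\<close>)
  have i2: "integrable M (\<lambda>x. 1/\<mu> * (v (W n x) * exp (-\<mu> * (A m x + W m x))))"
    by (rule integrable_mult_right[OF i1])
  have Wnn: "\<And>x. 0 \<le> W (Suc m) x" using W_rec[OF m] by simp
  have K: "Kint \<mu> (\<lambda>b. ennreal b) = ennreal (1/\<mu>)" unfolding Kint_def by (rule expd_K_id[OF mu])
  have nn: "(\<integral>\<^sup>+x. ennreal (v (W n x) * W (Suc m) x) \<partial>M) = (\<integral>\<^sup>+x. ennreal (1/\<mu> * (v (W n x) * exp (-\<mu> * (A m x + W m x)))) \<partial>M)"
  proof -
    have "(\<integral>\<^sup>+x. ennreal (v (W n x) * W (Suc m) x) \<partial>M) = (\<integral>\<^sup>+x. ennreal (v (W n x)) * (\<lambda>b. ennreal b) (W (Suc m) x) \<partial>M)"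
      by (intro nn_integral_cong) (simp add: ennreal_mult'' Wnn)
    also have "\<dots> = (\<integral>\<^sup>+x. ennreal (v (W n x)) * (ennreal (1 - exp (-\<mu> * (A m x + W m x))) * (\<lambda>b. ennreal b) 0
                 + ennreal (exp (-\<mu> * (A m x + W m x))) * Kint \<mu> (\<lambda>b. ennreal b)) \<partial>M)"
      by (rule stepB[OF n]) measurable
    also have "\<dots> = (\<integral>\<^sup>+x. ennreal (1/\<mu> * (v (W n x) * exp (-\<mu> * (A m x + W m x)))) \<partial>M)"
    proof (intro nn_integral_cong)
      fix x
      let ?a = "v (W n x)" and ?b = "exp (-\<mu> * (A m x + W m x))"
      have "ennreal (1/\<mu> * (?a * ?b)) = ennreal (1/\<mu>) * ennreal (?a * ?b)"
        by (rule ennreal_mult') (use mu in simp)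
      also have "ennreal (?a * ?b) = ennreal ?a * ennreal ?b" by (rule ennreal_mult'') simp
      finally have *: "ennreal (1/\<mu> * (?a * ?b)) = ennreal (1/\<mu>) * (ennreal ?a * ennreal ?b)" .
      show "ennreal ?a * (ennreal (1 - ?b) * (\<lambda>b. ennreal b) 0 + ennreal ?b * Kint \<mu> (\<lambda>b. ennreal b)) = ennreal (1/\<mu> * (?a * ?b))"
        unfolding * K by (simp add: mult_ac)
    qed
    finally show ?thesis .
  qed
  show int: "integrable M (\<lambda>x. v (W n x) * W (Suc m) x)"
  proof (rule integrableI_nonneg)
    show "AE x in M. 0 \<le> v (W n x) * W (Suc m) x" using vnn by eventually_elim (simp add: Wnn)
    show "(\<integral>\<^sup>+x. ennreal (v (W n x) * W (Suc m) x) \<partial>M) < \<infinity>"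
      unfolding nn using nn_integral_eq_integral[OF i2] vnn mu
      by (subst nn_integral_eq_integral[OF i2]) (auto elim!: eventually_mono)
  qed measurable
  have "(\<integral>x. v (W n x) * W (Suc m) x \<partial>M) = (\<integral>x. 1/\<mu> * (v (W n x) * exp (-\<mu> * (A m x + W m x))) \<partial>M)"
  proof (rule nn_to_real[OF int _ i2 _ nn])
    show "AE x in M. 0 \<le> v (W n x) * W (Suc m) x" using vnn by eventually_elim (simp add: Wnn)
    show "AE x in M. 0 \<le> 1/\<mu> * (v (W n x) * exp (-\<mu> * (A m x + W m x)))" using vnn by eventually_elim (use mu in simp)
  qed
  also have "\<dots> = 1/\<mu> * (\<integral>x. v (W n x) * exp (-\<mu> * (A m x + W m x)) \<partial>M)" by simp
  also have "\<dots> = alpha / \<mu> * (\<integral>x. v (W n x) * exp (-\<mu> * W m x) \<partial>M)"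
    using A_real[OF n v vnn vint] by simp
  finally show "(\<integral>x. v (W n x) * W (Suc m) x \<partial>M) = alpha / \<mu> * (\<integral>x. v (W n x) * exp (-\<mu> * W m x) \<partial>M)" .
qed

lemma R3v:
  fixes v :: "real \<Rightarrow> real"
  assumes n: "1 \<le> n" "n \<le> m" and v[measurable]: "v \<in> borel_measurable borel"
    and vnn: "AE x in M. 0 \<le> v (W n x)" and vint: "integrable M (\<lambda>x. v (W n x))"
  shows "(\<integral>x. v (W n x) * exp (-\<mu> * W (Suc m) x) \<partial>M)
     = (\<integral>x. v (W n x) \<partial>M) - alpha / 2 * (\<integral>x. v (W n x) * exp (-\<mu> * W m x) \<partial>M)"
proof -
  have m: "m \<ge> 1" using n by simp
  have [measurable]: "A m \<in> borel_measurable M" "W n \<in> borel_measurable M" "W m \<in> borel_measurable M" "W (Suc m) \<in> borel_measurable M"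
    using A_rv W_rv m n by auto
  have i1: "integrable M (\<lambda>x. v (W n x) * exp (-\<mu> * (A m x + W m x)))"
    by (rule int_bounded_mult[OF vint]) (use c_nonneg[OF m] mu in \<open>auto elim!: eventually_mono\<close>)
  have Wnn: "\<And>x. 0 \<le> W (Suc m) x" using W_rec[OF m] by simp
  have i0: "integrable M (\<lambda>x. v (W n x) * exp (-\<mu> * W (Suc m) x))"
    by (rule int_bounded_mult[OF vint]) (use Wnn mu in auto)
  have i2: "integrable M (\<lambda>x. v (W n x) * (1 - exp (-\<mu> * (A m x + W m x)) / 2))"
  proof (rule int_bounded_mult[OF vint])
    show "AE x in M. \<bar>1 - exp (-\<mu> * (A m x + W m x)) / 2\<bar> \<le> 1"
      using c_nonneg[OF m] proof eventually_elim
      case (elim x)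
      have "exp (-\<mu> * (A m x + W m x)) \<le> 1" using elim mu by simp
      moreover have "0 < exp (-\<mu> * (A m x + W m x))" by simp
      ultimately show ?case by linarith
    qed
  qed measurable
  have K: "Kint \<mu> (\<lambda>b. ennreal (exp (-\<mu> * b))) = ennreal (1/2)" unfolding Kint_def by (rule expd_K_exp[OF mu])
  have nn: "(\<integral>\<^sup>+x. ennreal (v (W n x) * exp (-\<mu> * W (Suc m) x)) \<partial>M) = (\<integral>\<^sup>+x. ennreal (v (W n x) * (1 - exp (-\<mu> * (A m x + W m x)) / 2)) \<partial>M)"
  proof -
    have "(\<integral>\<^sup>+x. ennreal (v (W n x) * exp (-\<mu> * W (Suc m) x)) \<partial>M) = (\<integral>\<^sup>+x. ennreal (v (W n x)) * (\<lambda>b. ennreal (exp (-\<mu> * b))) (W (Suc m) x) \<partial>M)"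
      by (intro nn_integral_cong) (simp add: ennreal_mult'')
    also have "\<dots> = (\<integral>\<^sup>+x. ennreal (v (W n x)) * (ennreal (1 - exp (-\<mu> * (A m x + W m x))) * (\<lambda>b. ennreal (exp (-\<mu> * b))) 0
                 + ennreal (exp (-\<mu> * (A m x + W m x))) * Kint \<mu> (\<lambda>b. ennreal (exp (-\<mu> * b)))) \<partial>M)"
      by (rule stepB[OF n]) measurable
    also have "\<dots> = (\<integral>\<^sup>+x. ennreal (v (W n x) * (1 - exp (-\<mu> * (A m x + W m x)) / 2)) \<partial>M)"
    proof (rule nn_integral_cong_AE)
      show "AE x in M. ennreal (v (W n x)) * (ennreal (1 - exp (-\<mu> * (A m x + W m x))) * (\<lambda>b. ennreal (exp (-\<mu> * b))) 0
                 + ennreal (exp (-\<mu> * (A m x + W m x))) * Kint \<mu> (\<lambda>b. ennreal (exp (-\<mu> * b))))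
            = ennreal (v (W n x) * (1 - exp (-\<mu> * (A m x + W m x)) / 2))"
        using c_nonneg[OF m] proof eventually_elim
        case (elim x)
        define e where "e = exp (-\<mu> * (A m x + W m x))"
        have e: "e \<le> 1" "0 \<le> e" using elim mu unfolding e_def by auto
        have h2: "(0::real) \<le> 1/2" by simp
        have "ennreal e * ennreal (1/2) = ennreal (e / 2)"
          using ennreal_mult[OF e(2) h2] by (simp only: times_divide_eq_right mult_1_right)
        moreover have "ennreal (1 - e) + ennreal (e/2) = ennreal (1 - e / 2)"
          using e by (subst ennreal_plus[symmetric]) auto
        ultimately have "ennreal (1 - e) * 1 + ennreal e * ennreal (1/2) = ennreal (1 - e / 2)" by simp
        then show ?case unfolding K e_def[symmetric] using e by (simp add: ennreal_mult'')
      qed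
    qed
    finally show ?thesis .
  qed
  have "(\<integral>x. v (W n x) * exp (-\<mu> * W (Suc m) x) \<partial>M) = (\<integral>x. v (W n x) * (1 - exp (-\<mu> * (A m x + W m x)) / 2) \<partial>M)"
  proof (rule nn_to_real[OF i0 _ i2 _ nn])
    show "AE x in M. 0 \<le> v (W n x) * exp (-\<mu> * W (Suc m) x)" using vnn by eventually_elim simp
    show "AE x in M. 0 \<le> v (W n x) * (1 - exp (-\<mu> * (A m x + W m x)) / 2)"
      using vnn c_nonneg[OF m] proof eventually_elim
      case (elim x)
      have "exp (-\<mu> * (A m x + W m x)) \<le> 1" using elim mu by simp
      then have "0 \<le> 1 - exp (-\<mu> * (A m x + W m x)) / 2" by linarith
      then show ?case using elim by (intro mult_nonneg_nonneg) auto
    qed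
  qed
  also have "\<dots> = (\<integral>x. v (W n x) - 1/2 * (v (W n x) * exp (-\<mu> * (A m x + W m x))) \<partial>M)"
    by (simp add: algebra_simps)
  also have "\<dots> = (\<integral>x. v (W n x) \<partial>M) - 1/2 * (\<integral>x. v (W n x) * exp (-\<mu> * (A m x + W m x)) \<partial>M)"
    using vint i1 by simp
  also have "\<dots> = (\<integral>x. v (W n x) \<partial>M) - alpha / 2 * (\<integral>x. v (W n x) * exp (-\<mu> * W m x) \<partial>M)"
    using A_real[OF n v vnn vint] by simp
  finally show ?thesis .
qed

end


lemma (in prob_space) cov_expand:
  fixes X Y :: "'a \<Rightarrow> real"
  assumes "integrable M X" "integrable M Y" "integrable M (\<lambda>x. X x * Y x)"
  shows "covariance M X Y = (\<integral>x. X x * Y x \<partial>M) - (\<integral>x. X x \<partial>M) * (\<integral>x. Y x \<partial>M)"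
proof -
  define a where "a = (\<integral>x. X x \<partial>M)"
  define b where "b = (\<integral>x. Y x \<partial>M)"
  have "covariance M X Y = (\<integral>x. (X x * Y x - b * X x) - (a * Y x - a * b) \<partial>M)"
    unfolding covariance_def a_def[symmetric] b_def[symmetric] by (simp add: algebra_simps)
  also have "\<dots> = (\<integral>x. X x * Y x - b * X x \<partial>M) - (\<integral>x. a * Y x - a * b \<partial>M)"
    using assms by (intro Bochner_Integration.integral_diff) auto
  also have "\<dots> = (\<integral>x. X x * Y x \<partial>M) - b * a - (a * b - a * b)"
    using assms by (simp add: a_def b_def prob_space)
  finally show ?thesis by (simp add: a_def b_def)
qed

context model begin

definition Mix where
  "Mix X q \<longleftrightarrow> 0 \<le> q \<and> q \<le> 1 \<and> (\<forall>h::real \<Rightarrow> ennreal. h \<in> borel_measurable borel \<longrightarrow>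
      (\<integral>\<^sup>+x. h (X x) \<partial>M) = ennreal (1 - q) * h 0 + ennreal q * Kint \<mu> h)"

lemma Mix_succ: "m \<ge> 1 \<Longrightarrow> \<exists>q. Mix (W (Suc m)) q"
proof -
  assume m: "m \<ge> 1"
  have [measurable]: "A m \<in> borel_measurable M" "W m \<in> borel_measurable M" "W (Suc m) \<in> borel_measurable M"
    using A_rv W_rv m by auto
  define q where "q = (\<integral>x. exp (-\<mu> * (A m x + W m x)) \<partial>M)"
  have ie: "integrable M (\<lambda>x. exp (-\<mu> * (A m x + W m x)))"
  proof (rule Bochner_Integration.integrable_bound[OF integrable_const[of 1]])
    show "AE x in M. norm (exp (-\<mu> * (A m x + W m x))) \<le> norm (1::real)"
      using c_nonneg[OF m] by eventually_elim (use mu in simp)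
  qed measurable
  have q0: "0 \<le> q" unfolding q_def by (rule integral_nonneg_AE) simp
  have q1: "q \<le> 1"
  proof -
    have "q \<le> (\<integral>x. 1 \<partial>M)" unfolding q_def
      by (rule integral_mono_AE[OF ie]) (use c_nonneg[OF m] mu in \<open>auto elim!: eventually_mono\<close>)
    then show ?thesis by (simp add: prob_space)
  qed
  have nq: "(\<integral>\<^sup>+x. ennreal (exp (-\<mu> * (A m x + W m x))) \<partial>M) = ennreal q"
    unfolding q_def by (rule nn_integral_eq_integral[OF ie]) simp
  have n1q: "(\<integral>\<^sup>+x. ennreal (1 - exp (-\<mu> * (A m x + W m x))) \<partial>M) = ennreal (1 - q)"
  proof -
    have i: "integrable M (\<lambda>x. 1 - exp (-\<mu> * (A m x + W m x)))" using ie by simp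
    have "(\<integral>\<^sup>+x. ennreal (1 - exp (-\<mu> * (A m x + W m x))) \<partial>M) = ennreal (\<integral>x. 1 - exp (-\<mu> * (A m x + W m x)) \<partial>M)"
      by (rule nn_integral_eq_integral[OF i]) (use c_nonneg[OF m] mu in \<open>auto elim!: eventually_mono\<close>)
    also have "(\<integral>x. 1 - exp (-\<mu> * (A m x + W m x)) \<partial>M) = 1 - q"
      unfolding q_def using ie by (simp add: prob_space)
    finally show ?thesis .
  qed
  have "Mix (W (Suc m)) q"
    unfolding Mix_def
  proof (intro conjI q0 q1 allI impI)
    fix h :: "real \<Rightarrow> ennreal" assume h[measurable]: "h \<in> borel_measurable borel"
    have "(\<integral>\<^sup>+x. h (W (Suc m) x) \<partial>M) = (\<integral>\<^sup>+x. (\<lambda>_. 1) (W m x) * h (W (Suc m) x) \<partial>M)" by simp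
    also have "\<dots> = (\<integral>\<^sup>+x. (\<lambda>_. 1) (W m x) * (ennreal (1 - exp (-\<mu> * (A m x + W m x))) * h 0
                 + ennreal (exp (-\<mu> * (A m x + W m x))) * Kint \<mu> h) \<partial>M)"
      by (rule stepB[OF m order_refl]) auto
    also have "\<dots> = (\<integral>\<^sup>+x. ennreal (1 - exp (-\<mu> * (A m x + W m x))) * h 0 \<partial>M)
                 + (\<integral>\<^sup>+x. ennreal (exp (-\<mu> * (A m x + W m x))) * Kint \<mu> h \<partial>M)"
      by (simp, rule nn_integral_add) auto
    also have "\<dots> = ennreal (1 - q) * h 0 + ennreal q * Kint \<mu> h"
      using nq n1q by (simp add: nn_integral_multc)
    finally show "(\<integral>\<^sup>+x. h (W (Suc m) x) \<partial>M) = ennreal (1 - q) * h 0 + ennreal q * Kint \<mu> h" .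
  qed
  then show ?thesis by blast
qed

lemma Mix_facts:
  assumes n: "n \<ge> 1" and mix: "Mix (W n) q"
  shows "(\<integral>x. W n x \<partial>M) = q / \<mu>"
    and "(\<integral>x. W n x * exp (-\<mu> * W n x) \<partial>M) = q / (4 * \<mu>)"
    and "(\<integral>x. exp (-\<mu> * W n x) \<partial>M) = 1 - q / 2"
    and "measure M {x \<in> space M. W n x = 0} = 1 - q"
proof -
  have [measurable]: "W n \<in> borel_measurable M" using W_rv n by auto
  have q: "0 \<le> q" "q \<le> 1" and H: "\<And>h. h \<in> borel_measurable borel \<Longrightarrow> (\<integral>\<^sup>+x. h (W n x) \<partial>M) = ennreal (1 - q) * h 0 + ennreal q * Kint \<mu> h"
    using mix unfolding Mix_def by auto
  have Wnn: "AE x in M. 0 \<le> W n x" by (rule W_nonneg[OF n])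
  have iW: "integrable M (W n)" by (rule W_int[OF n])
  show "(\<integral>x. W n x \<partial>M) = q / \<mu>"
  proof -
    have "ennreal (\<integral>x. W n x \<partial>M) = (\<integral>\<^sup>+x. (\<lambda>b. ennreal b) (W n x) \<partial>M)"
      using nn_integral_eq_integral[OF iW Wnn] by simp
    also have "\<dots> = ennreal (1 - q) * ennreal 0 + ennreal q * Kint \<mu> (\<lambda>b. ennreal b)"
      by (rule H) simp
    also have "\<dots> = ennreal (q / \<mu>)"
      unfolding Kint_def expd_K_id[OF mu] using q mu by (simp add: ennreal_mult[symmetric])
    finally show ?thesis using q mu by (simp add: integral_nonneg_AE[OF Wnn])
  qed
  show "(\<integral>x. W n x * exp (-\<mu> * W n x) \<partial>M) = q / (4 * \<mu>)"
  proof -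
    have i: "integrable M (\<lambda>x. W n x * exp (-\<mu> * W n x))"
      by (rule int_bounded_mult[OF iW]) (use Wnn mu in \<open>auto elim!: eventually_mono\<close>)
    have nn: "AE x in M. 0 \<le> W n x * exp (-\<mu> * W n x)" using Wnn by eventually_elim simp
    have "ennreal (\<integral>x. W n x * exp (-\<mu> * W n x) \<partial>M) = (\<integral>\<^sup>+x. (\<lambda>b. ennreal (b * exp (-\<mu> * b))) (W n x) \<partial>M)"
      using nn_integral_eq_integral[OF i nn] by simp
    also have "\<dots> = ennreal (1 - q) * ennreal (0 * exp (-\<mu> * 0)) + ennreal q * Kint \<mu> (\<lambda>b. ennreal (b * exp (-\<mu> * b)))"
      by (rule H) simp
    also have "\<dots> = ennreal (q / (4 * \<mu>))"
      unfolding Kint_def expd_K_xexp[OF mu] using q mu by (simp add: ennreal_mult[symmetric])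
    finally show ?thesis using q mu integral_nonneg_AE[OF nn] by simp
  qed
  show "(\<integral>x. exp (-\<mu> * W n x) \<partial>M) = 1 - q / 2"
  proof -
    have i: "integrable M (\<lambda>x. exp (-\<mu> * W n x))"
    proof (rule Bochner_Integration.integrable_bound[OF integrable_const[of 1]])
      show "AE x in M. norm (exp (-\<mu> * W n x)) \<le> norm (1::real)"
        using Wnn by eventually_elim (use mu in simp)
    qed measurable
    have "ennreal (\<integral>x. exp (-\<mu> * W n x) \<partial>M) = (\<integral>\<^sup>+x. (\<lambda>b. ennreal (exp (-\<mu> * b))) (W n x) \<partial>M)"
      using nn_integral_eq_integral[OF i] by simp
    also have "\<dots> = ennreal (1 - q) * ennreal (exp (-\<mu> * 0)) + ennreal q * Kint \<mu> (\<lambda>b. ennreal (exp (-\<mu> * b)))"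
      by (rule H) simp
    also have "\<dots> = ennreal (1 - q) + ennreal (q / 2)"
    proof -
      have h2: "(0::real) \<le> 1/2" by simp
      have "ennreal q * ennreal (1/2) = ennreal (q / 2)"
        using ennreal_mult[OF q(1) h2] by (simp only: times_divide_eq_right mult_1_right)
      then show ?thesis unfolding Kint_def expd_K_exp[OF mu] by simp
    qed
    also have "\<dots> = ennreal (1 - q / 2)"
      using q by (subst ennreal_plus[symmetric]) auto
    finally show ?thesis using q by (simp add: integral_nonneg_AE)
  qed
  show "measure M {x \<in> space M. W n x = 0} = 1 - q"
  proof -
    have S: "{x \<in> space M. W n x = 0} \<in> sets M" by measurable
    have "emeasure M {x \<in> space M. W n x = 0} = (\<integral>\<^sup>+x. indicator {x \<in> space M. W n x = 0} x \<partial>M)"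
      by (rule nn_integral_indicator[symmetric, OF S])
    also have "\<dots> = (\<integral>\<^sup>+x. indicator {0} (W n x) \<partial>M)"
      by (intro nn_integral_cong) (auto simp: indicator_def)
    also have "\<dots> = ennreal (1 - q) * indicator {0} (0::real) + ennreal q * Kint \<mu> (indicator {0})"
      by (rule H) simp
    also have "\<dots> = ennreal (1 - q)"
      unfolding Kint_def expd_K_zero by simp
    finally show ?thesis using q by (simp add: measure_def)
  qed
qed

lemma main_cov:
  assumes n: "n \<ge> 1" and mix: "Mix (W n) q" and k: "k \<ge> 1"
  shows "covariance M (W n) (W (n + k)) =
            (\<integral>x. W n x \<partial>M) / \<mu> * (measure M {x \<in> space M. W n x = 0} + 1/2) * (- alpha / 2) ^ k"
proof -
  note F = Mix_facts[OF n mix]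
  have q: "0 \<le> q" "q \<le> 1" using mix unfolding Mix_def by auto
  have vid: "(\<lambda>g::real. g) \<in> borel_measurable borel" by simp
  have vone: "(\<lambda>g::real. 1::real) \<in> borel_measurable borel" by simp
  have Wnn: "AE x in M. 0 \<le> W n x" by (rule W_nonneg[OF n])
  have iW: "integrable M (W n)" by (rule W_int[OF n])
  have nn1: "AE x in M. (0::real) \<le> 1" by simp
  have i1: "integrable M (\<lambda>x. 1::real)" by simp
  define w where "w = (\<integral>x. W n x \<partial>M)"
  define a where "a j = (\<integral>x. W n x * exp (-\<mu> * W (n + j) x) \<partial>M)" for j
  define b where "b j = (\<integral>x. exp (-\<mu> * W (n + j) x) \<partial>M)" for j
  have ra: "a (Suc j) = w - alpha / 2 * a j" for j
    using R3v[OF n _ vid Wnn, of "n + j"] iW unfolding a_def w_def by simp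
  have rb: "b (Suc j) = 1 - alpha / 2 * b j" for j
    using R3v[OF n _ vone nn1 i1, of "n + j"] unfolding b_def by (simp add: prob_space)
  have d: "a j - w * b j = (- alpha / 2) ^ j * (a 0 - w * b 0)" for j
  proof (induction j)
    case (Suc j)
    have "a (Suc j) - w * b (Suc j) = (- alpha / 2) * (a j - w * b j)"
      unfolding ra rb by (simp add: right_diff_distrib left_diff_distrib diff_divide_distrib mult_ac)
    then show ?case using Suc by simp
  qed simp
  obtain j where j: "k = Suc j" using k by (cases k) auto
  have c1: "(\<integral>x. W n x * W (n + k) x \<partial>M) = alpha / \<mu> * a j"
    using R1v(2)[OF n _ vid Wnn, of "n + j"] iW unfolding a_def j by simp
  have ii1: "integrable M (\<lambda>x. W n x * W (n + k) x)"
    using R1v(1)[OF n _ vid Wnn, of "n + j"] iW unfolding j by simp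
  have c2: "(\<integral>x. W (n + k) x \<partial>M) = alpha / \<mu> * b j"
    using R1v(2)[OF n _ vone nn1 i1, of "n + j"] unfolding b_def j by simp
  have iWk: "integrable M (W (n + k))" by (rule W_int) (use n in simp)
  have "covariance M (W n) (W (n + k)) = alpha / \<mu> * a j - w * (alpha / \<mu> * b j)"
    by (subst cov_expand[OF iW iWk ii1]) (simp add: c1 c2 w_def)
  also have "\<dots> = alpha / \<mu> * ((- alpha / 2) ^ j * (a 0 - w * b 0))"
  proof -
    have "alpha / \<mu> * a j - w * (alpha / \<mu> * b j) = alpha / \<mu> * (a j - w * b j)" by (simp add: algebra_simps)
    then show ?thesis by (simp only: d[of j])
  qed
  also have "a 0 = q / (4 * \<mu>)" using F(2) unfolding a_def by simp
  also have "b 0 = 1 - q / 2" using F(3) unfolding b_def by simp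
  also have "w = q / \<mu>" using F(1) unfolding w_def by simp
  finally have "covariance M (W n) (W (n + k)) = alpha / \<mu> * ((- alpha / 2) ^ j * (q / (4 * \<mu>) - q / \<mu> * (1 - q / 2)))" .
  also have "\<dots> = q / \<mu> / \<mu> * ((1 - q) + 1/2) * (- alpha / 2) ^ k"
    unfolding j using mu by (simp add: field_simps)
  finally show ?thesis by (simp add: F(1) F(4))
qed

end


context model begin

lemma Mix_1:
  assumes hyp: "\<forall>t\<ge>0. cond_prob M (\<lambda>x. W 1 x > t) (\<lambda>x. W 1 x > 0) = exp (- \<mu> * t)"
  shows "\<exists>q. Mix (W 1) q"
proof -
  have [measurable]: "W 1 \<in> borel_measurable M" "W (Suc 0) \<in> borel_measurable M" "B 2 \<in> borel_measurable M" using W1_rv B_rv by auto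
  define q where "q = \<P>(x in M. W 1 x > 0)"
  have tail: "\<P>(x in M. W 1 x > t) = q * exp (- \<mu> * t)" and qpos: "q > 0" if "t \<ge> 0" for t
  proof -
    have c0: "cond_prob M (\<lambda>x. W 1 x > 0) (\<lambda>x. W 1 x > 0) = 1" using hyp by simp
    have "q \<noteq> 0"
    proof
      assume "q = 0" then show False using c0 by (simp add: cond_prob_def q_def)
    qed
    then show q0: "q > 0" unfolding q_def using measure_nonneg[of M] by (simp add: order_less_le)
    have "{x \<in> space M. W 1 x > t \<and> W 1 x > 0} = {x \<in> space M. W 1 x > t}" using that by auto
    then have "cond_prob M (\<lambda>x. W 1 x > t) (\<lambda>x. W 1 x > 0) = \<P>(x in M. W 1 x > t) / q"
      by (simp add: cond_prob_def q_def)
    then show "\<P>(x in M. W 1 x > t) = q * exp (- \<mu> * t)" using hyp that q0 by (simp add: field_simps)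
  qed
  have q0: "q > 0" using qpos[of 0] by simp
  have q1: "q \<le> 1" unfolding q_def by simp
  define c0 where "c0 = - ln q / \<mu>"
  have ec0: "exp (- \<mu> * c0) = q" unfolding c0_def using mu q0 by simp
  have "ln q \<le> 0" using q0 q1 by simp
  then have c0nn: "0 \<le> c0" unfolding c0_def using mu by (simp add: divide_nonpos_pos)
  define Y where "Y = (\<lambda>\<omega>. max 0 (B 2 \<omega> - c0))"
  have Ymeas[measurable]: "Y \<in> borel_measurable M" unfolding Y_def by measurable
  have cdfX: "cdf (distr M borel X) x = \<P>(\<omega> in M. X \<omega> \<le> x)" if [measurable]: "X \<in> borel_measurable M" for X x
    unfolding cdf_def by (subst measure_distr) (auto intro!: arg_cong[where f="measure M"])
  have "distr M borel (W 1) = distr M borel Y"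
  proof (rule cdf_unique)
    show "real_distribution (distr M borel (W 1))" by (rule real_distribution_distr) (rule W1_rv)
    show "real_distribution (distr M borel Y)" by (rule real_distribution_distr) measurable
    show "cdf (distr M borel (W 1)) = cdf (distr M borel Y)"
    proof
      fix x :: real
      show "cdf (distr M borel (W 1)) x = cdf (distr M borel Y) x"
      proof (cases "x < 0")
        case True
        have "emeasure M {\<omega> \<in> space M. W 1 \<omega> \<le> x} = 0"
          by (rule emeasure_eq_0_AE) (use W1_nonneg True in \<open>auto elim!: eventually_mono\<close>)
        then have "\<P>(\<omega> in M. W 1 \<omega> \<le> x) = 0" by (simp add: measure_def)
        moreover have e: "{\<omega> \<in> space M. Y \<omega> \<le> x} = {}" using True unfolding Y_def by auto
        ultimately show ?thesis unfolding cdfX[OF W1_rv] cdfX[OF Ymeas] e by simp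
      next
        case False
        then have x: "0 \<le> x" by simp
        have "\<P>(\<omega> in M. W 1 \<omega> \<le> x) = 1 - \<P>(\<omega> in M. \<not> W 1 \<omega> \<le> x)"
          by (subst prob_neg) auto
        also have "\<P>(\<omega> in M. \<not> W 1 \<omega> \<le> x) = \<P>(\<omega> in M. W 1 \<omega> > x)" by (simp add: not_le)
        also have "\<dots> = q * exp (- \<mu> * x)" by (rule tail[OF x])
        finally have 1: "\<P>(\<omega> in M. W 1 \<omega> \<le> x) = 1 - q * exp (- \<mu> * x)" .
        have "{\<omega> \<in> space M. Y \<omega> \<le> x} = {\<omega> \<in> space M. B 2 \<omega> \<le> x + c0}" using x unfolding Y_def by auto
        then have "\<P>(\<omega> in M. Y \<omega> \<le> x) = \<P>(\<omega> in M. B 2 \<omega> \<le> x + c0)" by simp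
        also have "\<dots> = 1 - exp (- (x + c0) * \<mu>)"
          by (rule exponential_distributedD_le[OF B_exp _ mu]) (use x c0nn in auto)
        also have "exp (- (x + c0) * \<mu>) = q * exp (- \<mu> * x)"
          by (subst ec0[symmetric], simp add: exp_add[symmetric] algebra_simps)
        finally show ?thesis using 1 unfolding cdfX[OF W1_rv] cdfX[OF Ymeas] by simp
      qed
    qed
  qed
  then have dist: "\<And>h. h \<in> borel_measurable borel \<Longrightarrow> (\<integral>\<^sup>+x. h (W 1 x) \<partial>M) = (\<integral>\<^sup>+x. h (Y x) \<partial>M)"
  proof -
    fix h :: "real \<Rightarrow> ennreal" assume [measurable]: "h \<in> borel_measurable borel"
    assume eq: "distr M borel (W 1) = distr M borel Y"
    have "(\<integral>\<^sup>+x. h (W 1 x) \<partial>M) = (\<integral>\<^sup>+x. h x \<partial>distr M borel (W 1))"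
      by (rule nn_integral_distr[symmetric]) auto
    also have "\<dots> = (\<integral>\<^sup>+x. h x \<partial>distr M borel Y)" unfolding eq ..
    also have "\<dots> = (\<integral>\<^sup>+x. h (Y x) \<partial>M)"
      by (rule nn_integral_distr) auto
    finally show "(\<integral>\<^sup>+x. h (W 1 x) \<partial>M) = (\<integral>\<^sup>+x. h (Y x) \<partial>M)" .
  qed
  have "Mix (W 1) q"
    unfolding Mix_def
  proof (intro conjI allI impI)
    show "0 \<le> q" "q \<le> 1" using q0 q1 by auto
    fix h :: "real \<Rightarrow> ennreal" assume h[measurable]: "h \<in> borel_measurable borel"
    have "(\<integral>\<^sup>+x. h (W 1 x) \<partial>M) = (\<integral>\<^sup>+x. h (max 0 (B 2 x - c0)) \<partial>M)" unfolding dist[OF h] Y_def ..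
    also have "\<dots> = (\<integral>\<^sup>+b. ennreal (exponential_density \<mu> b) * h (max 0 (b - c0)) \<partial>lborel)"
      by (rule distributed_nn_integral[OF B_exp, symmetric]) auto
    also have "\<dots> = ennreal (1 - q) * h 0 + ennreal q * Kint \<mu> h"
      unfolding Kint_def using expd_psi[OF mu c0nn h] ec0 by simp
    finally show "(\<integral>\<^sup>+x. h (W 1 x) \<partial>M) = ennreal (1 - q) * h 0 + ennreal q * Kint \<mu> h" .
  qed
  then show ?thesis by blast
qed

end

theorem theorem3p4:
  fixes M :: "'a measure" and A B W :: "nat \<Rightarrow> 'a \<Rightarrow> real" and \<mu> :: real
  assumes "prob_space M"
    and "\<mu> > 0"
    and indep: "prob_space.indep_vars M (\<lambda>_. borel) (driving_family A B (W 1))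
                  ({Inl n | n. n \<ge> 1} \<union> {Inr (Inl n) | n. n \<ge> 1} \<union> {Inr (Inr ())})"
    and A_rv: "\<And>n. n \<ge> 1 \<Longrightarrow> A n \<in> borel_measurable M"
    and A_nonneg: "\<And>n. n \<ge> 1 \<Longrightarrow> AE x in M. A n x \<ge> 0"
    and A_ident: "\<And>n. n \<ge> 1 \<Longrightarrow> distr M borel (A n) = distr M borel (A 1)"
    and B_exp: "\<And>n. n \<ge> 1 \<Longrightarrow> distributed M lborel (B n) (exponential_density \<mu>)"
    and W1_rv: "W 1 \<in> borel_measurable M"
    and W1_nonneg: "AE x in M. W 1 x \<ge> 0"
    and W1_int: "integrable M (W 1)"
    and W_rec: "\<And>n x. n \<ge> 1 \<Longrightarrow> W (Suc n) x = max 0 (B (Suc n) x - A n x - W n x)"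
  defines "\<alpha> \<equiv> (\<lambda>s. \<integral>x. exp (- s * A 1 x) \<partial>M)"
  shows "(\<forall>n\<ge>2. \<forall>k\<ge>1. covariance M (W n) (W (n + k)) =
            (\<integral>x. W n x \<partial>M) / \<mu> * (measure M {x \<in> space M. W n x = 0} + 1/2) * (- \<alpha> \<mu> / 2) ^ k)
       \<and> ((\<forall>t\<ge>0. cond_prob M (\<lambda>x. W 1 x > t) (\<lambda>x. W 1 x > 0) = exp (- \<mu> * t)) \<longrightarrow>
          (\<forall>k\<ge>1. covariance M (W 1) (W (1 + k)) =
            (\<integral>x. W 1 x \<partial>M) / \<mu> * (measure M {x \<in> space M. W 1 x = 0} + 1/2) * (- \<alpha> \<mu> / 2) ^ k))"
proof -
  interpret prob_space M by fact
  interpret model M A B W \<mu>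
  proof (unfold_locales)
    show "indep_vars (\<lambda>_. borel) (driving_family A B (W 1)) II"
      using indep unfolding II_def .
  qed (fact | (rule assms; assumption))+
  have al: "\<alpha> \<mu> = alpha" unfolding \<alpha>_def alpha_def ..
  show ?thesis
  proof (intro conjI allI impI)
    fix n k :: nat assume n: "n \<ge> 2" and k: "k \<ge> 1"
    obtain m where m: "n = Suc m" "m \<ge> 1" using n by (cases n) auto
    obtain q where "Mix (W n) q" using Mix_succ[OF m(2)] m(1) by auto
    from main_cov[OF _ this k] n
    show "covariance M (W n) (W (n + k)) =
            (\<integral>x. W n x \<partial>M) / \<mu> * (measure M {x \<in> space M. W n x = 0} + 1/2) * (- \<alpha> \<mu> / 2) ^ k"
      by (simp add: al)
  next
    fix k :: nat assume hyp: "\<forall>t\<ge>0. cond_prob M (\<lambda>x. W 1 x > t) (\<lambda>x. W 1 x > 0) = exp (- \<mu> * t)" and k: "k \<ge> 1"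
    obtain q where "Mix (W 1) q" using Mix_1[OF hyp] by auto
    from main_cov[OF _ this k]
    show "covariance M (W 1) (W (1 + k)) =
            (\<integral>x. W 1 x \<partial>M) / \<mu> * (measure M {x \<in> space M. W 1 x = 0} + 1/2) * (- \<alpha> \<mu> / 2) ^ k"
      by (simp add: al)
  qed
qed

end
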